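(* Let $M,N\in\mathbb{R}^{(k+n)\times(k+n)}$ be symmetric, partitioned as $N=\begin{bmatrix} N_{11} & N_{12}\\ N_{12}^\top & N_{22}\end{bmatrix}$ with $N_{11}\in\mathbb{R}^{k\times k}$, $N_{22}\in\mathbb{R}^{n\times n}$. Assume $N$ is nonsingular, $N_{11}\ge 0$ and $N_{22}<0$. Let $\mathcal{S}_N:=\{Z\in\mathbb{R}^{n\times k}\mid \begin{bmatrix} I\\ Z\end{bmatrix}^\top N\begin{bmatrix} I\\ Z\end{bmatrix}\ge 0\}$. Then $\begin{bmatrix} I\\ Z\end{bmatrix}^\top M\begin{bmatrix} I\\ Z\end{bmatrix}>0$ for all $Z\in\mathcal{S}_N$ if and only if there exists $\alpha\ge 0$ such that $M-\alpha N>0$.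
   Context: $I$ denotes the $k\times k$ identity. For symmetric matrices, $\ge 0$ means positive semidefinite and $>0$ positive definite. *)

theory Defs
  imports "HOL-Analysis.Analysis"
begin

definition symmetric_mat :: "real^'m^'m \<Rightarrow> bool" where
  "symmetric_mat A \<longleftrightarrow> transpose A = A"

definition psd :: "real^'m^'m \<Rightarrow> bool" where
  "psd A \<longleftrightarrow> symmetric_mat A \<and> (\<forall>x. 0 \<le> x \<bullet> (A *v x))"

definition pd :: "real^'m^'m \<Rightarrow> bool" where
  "pd A \<longleftrightarrow> symmetric_mat A \<and> (\<forall>x. x \<noteq> 0 \<longrightarrow> 0 < x \<bullet> (A *v x))"

definition blk11 :: "real^('k::finite+'n::finite)^('k+'n) \<Rightarrow> real^'k^'k" where
  "blk11 N = (\<chi> i j. N $ Inl i $ Inl j)"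

definition blk22 :: "real^('k::finite+'n::finite)^('k+'n) \<Rightarrow> real^'n^'n" where
  "blk22 N = (\<chi> i j. N $ Inr i $ Inr j)"

definition stackIZ :: "real^'k::finite^'n::finite \<Rightarrow> real^'k^('k+'n)" where
  "stackIZ Z = (\<chi> i j. case i of Inl a \<Rightarrow> (if a = j then 1 else 0) | Inr b \<Rightarrow> Z $ b $ j)"

definition quadIZ :: "real^('k::finite+'n::finite)^('k+'n) \<Rightarrow> real^'k^'n \<Rightarrow> real^'k^'k" where
  "quadIZ N Z = transpose (stackIZ Z) ** N ** stackIZ Z"

definition S_N :: "real^('k::finite+'n::finite)^('k+'n) \<Rightarrow> (real^'k^'n) set" where
  "S_N N = {Z. psd (quadIZ N Z)}"

end

theory Submission
  imports Defs
begin


definition qf :: "real^'m^'m \<Rightarrow> real^'m \<Rightarrow> real" where "qf A x = x \<bullet> (A *v x)"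
definition bf :: "real^'m^'m \<Rightarrow> real^'m \<Rightarrow> real^'m \<Rightarrow> real" where "bf A x y = x \<bullet> (A *v y)"

lemma bf_sym: "symmetric_mat A \<Longrightarrow> bf A x y = bf A y x"
  unfolding bf_def symmetric_mat_def
  by (metis dot_lmul_matrix inner_commute transpose_matrix_vector)

lemma qf_expand: "qf A (a + c *\<^sub>R b) = qf A a + c * (bf A a b + bf A b a) + c^2 * qf A b"
  unfolding qf_def bf_def
  by (simp add: algebra_simps inner_add_left inner_add_right power2_eq_square)

lemma qf_add: "qf A (a + b) = qf A a + bf A a b + bf A b a + qf A b"
  using qf_expand[of A a 1 b] by simp

lemma qf_scale: "qf A (c *\<^sub>R b) = c^2 * qf A b"
  using qf_expand[of A 0 c b] by (simp add: qf_def bf_def)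

lemma bf_add_left: "bf A (a + b) c = bf A a c + bf A b c"
  unfolding bf_def by (simp add: inner_add_left)
lemma bf_add_right: "bf A c (a + b) = bf A c a + bf A c b"
  unfolding bf_def by (simp add: algebra_simps inner_add_right)

lemma psd_ker:
  assumes "symmetric_mat A" "\<forall>x. 0 \<le> qf A x" "qf A u = 0"
  shows "A *v u = 0"
proof (rule ccontr)
  let ?v = "A *v u"
  assume ne: "?v \<noteq> 0"
  have bv: "bf A ?v u = ?v \<bullet> ?v" by (simp add: bf_def)
  have bu: "bf A u ?v = ?v \<bullet> ?v" using bf_sym[OF assms(1)] bv by metis
  define c where "c = qf A ?v"
  have c0: "c \<ge> 0" using assms(2) c_def by auto
  define w where "w = ?v \<bullet> ?v"
  have w0: "w > 0" using ne w_def by simp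
  define d where "d = c + 1"
  have d0: "d > 0" using c0 d_def by simp
  have cd: "c = d - 1" using d_def by simp
  define t where "t = - w / d"
  have "0 \<le> qf A (u + t *\<^sub>R ?v)" using assms(2) by auto
  also have "\<dots> = 2 * t * w + t^2 * c"
    using qf_expand[of A u t ?v] assms(3) bv bu unfolding w_def c_def by simp
  also have "\<dots> = w^2 * (- d - 1) / d^2"
    unfolding t_def cd using d0 by (simp add: field_simps power2_eq_square)
  also have "\<dots> < 0" using w0 d0 by (intro divide_neg_pos mult_pos_neg) auto
  finally show False by simp
qed

definition Lv :: "real^'k \<Rightarrow> real^('k::finite+'n::finite)" where
  "Lv v = (\<chi> i. case i of Inl a \<Rightarrow> v$a | Inr b \<Rightarrow> 0)"
definition Rv :: "real^'n \<Rightarrow> real^('k::finite+'n::finite)" where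
  "Rv w = (\<chi> i. case i of Inl a \<Rightarrow> 0 | Inr b \<Rightarrow> w$b)"
definition prL :: "real^('k::finite+'n::finite) \<Rightarrow> real^'k" where
  "prL x = (\<chi> a. x$Inl a)"
definition prR :: "real^('k::finite+'n::finite) \<Rightarrow> real^'n" where
  "prR x = (\<chi> a. x$Inr a)"

lemma sum_Plus_UNIV: "(\<Sum>i\<in>(UNIV::('k::finite+'n::finite) set). f i) = (\<Sum>a\<in>UNIV. f (Inl a)) + (\<Sum>b\<in>UNIV. f (Inr b))"
  using sum.Plus[of "UNIV::'k set" "UNIV::'n set" f] by (simp add: comp_def)

lemma inner_Plus: "(x::real^('k::finite+'n::finite)) \<bullet> y = prL x \<bullet> prL y + prR x \<bullet> prR y"
  unfolding inner_vec_def prL_def prR_def by (simp add: sum_Plus_UNIV)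

lemma prL_Lv[simp]: "prL (Lv v) = v" by (simp add: prL_def Lv_def)
lemma prR_Lv[simp]: "prR (Lv v) = 0" by (simp add: prR_def Lv_def vec_eq_iff)
lemma prL_Rv[simp]: "prL (Rv v) = 0" by (simp add: prL_def Rv_def vec_eq_iff)
lemma prR_Rv[simp]: "prR (Rv v) = v" by (simp add: prR_def Rv_def)
lemma prL_add[simp]: "prL (x + y) = prL x + prL y" by (simp add: prL_def vec_eq_iff)
lemma prR_add[simp]: "prR (x + y) = prR x + prR y" by (simp add: prR_def vec_eq_iff)
lemma prL_scale[simp]: "prL (c *\<^sub>R x) = c *\<^sub>R prL x" by (simp add: prL_def vec_eq_iff)
lemma prR_scale[simp]: "prR (c *\<^sub>R x) = c *\<^sub>R prR x" by (simp add: prR_def vec_eq_iff)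
lemma vec_Plus_eq: "(x::real^('k::finite+'n::finite)) = y \<longleftrightarrow> prL x = prL y \<and> prR x = prR y"
  apply (auto simp: prL_def prR_def vec_eq_iff)
  by (metis sum.exhaust)
lemma Lv_0[simp]: "Lv 0 = 0" by (simp add: Lv_def vec_eq_iff split: sum.split)
lemma Rv_0[simp]: "Rv 0 = 0" by (simp add: Rv_def vec_eq_iff split: sum.split)
lemma Rv_add: "Rv (a + b) = Rv a + Rv b" by (simp add: vec_Plus_eq)
lemma Rv_scale: "Rv (c *\<^sub>R a) = c *\<^sub>R Rv a" by (simp add: vec_Plus_eq)
lemma Lv_add: "Lv (a + b) = Lv a + Lv b" by (simp add: vec_Plus_eq)
lemma Lv_scale: "Lv (c *\<^sub>R a) = c *\<^sub>R Lv a" by (simp add: vec_Plus_eq)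
lemma Lv_eq0[simp]: "Lv u = 0 \<longleftrightarrow> u = 0" by (metis Lv_0 prL_Lv)
lemma decomp: "x = Lv (prL x) + Rv (prR x)" by (simp add: vec_Plus_eq)

definition Cb :: "real^('k::finite+'n::finite)^('k+'n) \<Rightarrow> real^'k^'n" where
  "Cb N = (\<chi> b a. N $ Inr b $ Inl a)"

lemma prL_NLv: "prL (N *v Lv u) = blk11 N *v u"
  by (simp add: prL_def Lv_def blk11_def matrix_vector_mult_def sum_Plus_UNIV)
lemma prR_NLv: "prR (N *v Lv u) = Cb N *v u"
  by (simp add: prR_def Lv_def Cb_def matrix_vector_mult_def sum_Plus_UNIV)
lemma prR_NRv: "prR (N *v Rv u) = blk22 N *v u"
  by (simp add: prR_def Rv_def blk22_def matrix_vector_mult_def sum_Plus_UNIV)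
lemma qf_Lv: "qf N (Lv u) = u \<bullet> (blk11 N *v u)"
  unfolding qf_def by (simp add: inner_Plus prL_NLv)
lemma qf_Rv: "qf N (Rv u) = u \<bullet> (blk22 N *v u)"
  unfolding qf_def by (simp add: inner_Plus prR_NRv)
lemma inner_Rv: "x \<bullet> Rv w = prR x \<bullet> w" by (simp add: inner_Plus)
lemma inner_Lv: "x \<bullet> Lv w = prL x \<bullet> w" by (simp add: inner_Plus)

lemma qf_quadIZ: "qf (quadIZ A Z) v = qf A (stackIZ Z *v v)"
  unfolding qf_def quadIZ_def
  by (metis dot_lmul_matrix inner_commute matrix_vector_mul_assoc transpose_matrix_vector)

lemma sym_quadIZ: "symmetric_mat A \<Longrightarrow> symmetric_mat (quadIZ A Z)"
  unfolding symmetric_mat_def quadIZ_def by (simp add: matrix_transpose_mul matrix_mul_assoc)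

lemma stack_mult: "stackIZ Z *v v = Lv v + Rv (Z *v v)"
  unfolding vec_Plus_eq
  apply (simp add: prL_def prR_def stackIZ_def matrix_vector_mult_def vec_eq_iff Lv_def Rv_def)
proof
  fix i
  have "(\<Sum>j\<in>UNIV. (if i = j then 1 else 0) * v $ j) = (\<Sum>j\<in>UNIV. if i = j then v $ j else 0)"
    by (rule sum.cong) auto
  then show "(\<Sum>j\<in>UNIV. (if i = j then 1 else 0) * v $ j) = v $ i" by simp
qed



lemma pair_lemma:
  fixes A B :: "real^'m^'m"
  assumes H: "\<forall>z. qf B z \<ge> 0 \<longrightarrow> qf A z \<ge> 0" and hx: "qf B x > 0" and hy: "qf B y < 0"
  shows "qf A x * qf B y \<le> qf A y * qf B x"
proof -
  define pa where "pa = bf A y x + bf A x y"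
  define pb where "pb = bf B y x + bf B x y"
  have g: "\<And>s. qf B (y + s *\<^sub>R x) = qf B y + s * pb + s^2 * qf B x"
    using qf_expand pb_def by metis
  have f: "\<And>s. qf A (y + s *\<^sub>R x) = qf A y + s * pa + s^2 * qf A x"
    using qf_expand pa_def by metis
  define D where "D = pb^2 - 4 * qf B x * qf B y"
  have D0: "D > pb^2" unfolding D_def using hx hy
    by (simp add: mult_pos_neg)
  define r where "r = sqrt D"
  have "D \<ge> 0" using D0 zero_le_power2[of pb] by linarith
  then have r2: "r^2 = D" unfolding r_def by simp
  have rp: "pb < r" unfolding r_def using D0 real_less_rsqrt by blast
  have rm: "- pb < r" unfolding r_def using D0 real_less_rsqrt by (metis power2_minus)
  define s1 where "s1 = (- pb - r) / (2 * qf B x)"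
  define s2 where "s2 = (- pb + r) / (2 * qf B x)"
  have s1n: "s1 < 0" unfolding s1_def using hx rm by (simp add: divide_neg_pos)
  have s2p: "s2 > 0" unfolding s2_def using hx rp by simp
  have root: "qf B y + s * pb + s^2 * qf B x = 0" if "2 * qf B x * s = - pb + e * r" "e^2 = 1" for s e
  proof -
    have "4 * qf B x * (qf B y + s * pb + s^2 * qf B x) = (2 * qf B x * s)^2 + 2 * pb * (2 * qf B x * s) + 4 * qf B x * qf B y"
      by (simp add: algebra_simps power2_eq_square)
    also have "\<dots> = (- pb + e * r)^2 + 2 * pb * (- pb + e * r) + 4 * qf B x * qf B y"
      using that by simp
    also have "\<dots> = e^2 * r^2 - pb^2 + 4 * qf B x * qf B y"
      by (simp add: algebra_simps power2_eq_square)
    also have "\<dots> = 0" using that r2 D_def by simp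
    finally show ?thesis using hx by simp
  qed
  have g1: "qf B (y + s1 *\<^sub>R x) = 0"
    using g root[of s1 "-1"] hx unfolding s1_def by simp
  have g2: "qf B (y + s2 *\<^sub>R x) = 0"
    using g root[of s2 1] hx unfolding s2_def by simp
  define c where "c = qf A y * qf B x - qf A x * qf B y"
  define d where "d = pa * qf B x - qf A x * pb"
  have L: "c + s * d = qf A (y + s *\<^sub>R x) * qf B x - qf A x * qf B (y + s *\<^sub>R x)" for s
    unfolding c_def d_def f g by (simp add: algebra_simps power2_eq_square)
  have L1: "c + s1 * d \<ge> 0" using L[of s1] g1 H hx by simp
  have L2: "c + s2 * d \<ge> 0" using L[of s2] g2 H hx by simp
  have "c \<ge> 0"
  proof (cases "d \<ge> 0")
    case True
    then have "s1 * d \<le> 0" using s1n by (simp add: mult_nonpos_nonneg)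
    then show ?thesis using L1 by linarith
  next
    case False
    then have "s2 * d \<le> 0" using s2p by (simp add: mult_nonneg_nonpos)
    then show ?thesis using L2 by linarith
  qed
  then show ?thesis unfolding c_def by simp
qed



lemma s_lemma:
  fixes A B :: "real^'m^'m"
  assumes H: "\<forall>z. qf B z \<ge> 0 \<longrightarrow> qf A z \<ge> 0" and x0: "qf B x0 > 0"
  shows "\<exists>\<tau>\<ge>0. \<forall>z. qf A z - \<tau> * qf B z \<ge> 0"
proof -
  define S where "S = (\<lambda>z. qf A z / qf B z) ` {z. qf B z > 0}"
  define \<tau> where "\<tau> = Inf S"
  have Sne: "S \<noteq> {}" using x0 S_def by auto
  have Spos: "\<And>v. v \<in> S \<Longrightarrow> v \<ge> 0" using H unfolding S_def by auto
  have bdd: "bdd_below S" using Spos by (intro bdd_belowI[where m=0]) auto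
  have t0: "\<tau> \<ge> 0" unfolding \<tau>_def using Sne Spos by (intro cInf_greatest) auto
  have "qf A z - \<tau> * qf B z \<ge> 0" for z
  proof (cases "qf B z" "0::real" rule: linorder_cases)
    case greater
    have "\<tau> \<le> qf A z / qf B z" unfolding \<tau>_def using bdd greater S_def by (intro cInf_lower) auto
    then show ?thesis using greater by (simp add: pos_le_divide_eq)
  next
    case equal then show ?thesis using H by simp
  next
    case less
    have "qf A z / qf B z \<le> \<tau>" unfolding \<tau>_def
    proof (rule cInf_greatest[OF Sne])
      fix v assume "v \<in> S"
      then obtain x where x: "qf B x > 0" "v = qf A x / qf B x" unfolding S_def by auto
      have "qf A x * qf B z \<le> qf A z * qf B x" using pair_lemma[OF H x(1) less] .
      moreover have e1: "v * qf B x = qf A x" using x by simp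
      ultimately have "(v * qf B z) * qf B x \<le> qf A z * qf B x"
        by (metis mult.assoc mult.commute)
      then have "v * qf B z \<le> qf A z" using x(1) by (simp add: mult_le_cancel_right_pos)
      then show "qf A z / qf B z \<le> v" using less by (simp add: neg_divide_le_eq)
    qed
    then show ?thesis using less by (simp add: neg_divide_le_eq)
  qed
  then show ?thesis using t0 by blast
qed



lemma qf_cont: "continuous_on UNIV (qf A)"
proof -
  have "continuous_on UNIV ((*v) A)"
    using matrix_vector_mul_bounded_linear linear_continuous_on by blast
  then show ?thesis unfolding qf_def by (intro continuous_intros)
qed

lemma qf_zero[simp]: "qf A 0 = 0" by (simp add: qf_def)

lemma qf_shift: "qf (A - e *\<^sub>R mat 1) z = qf A z - e * (z \<bullet> z)"
proof -
  have "(e *\<^sub>R mat 1) *v z = e *\<^sub>R z" by (metis scaleR_matrix_vector_assoc matrix_vector_mul_lid)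
  then show ?thesis unfolding qf_def by (simp add: matrix_vector_mult_diff_rdistrib inner_diff_right)
qed



lemma s_lemma_strict:
  fixes A B :: "real^'m^'m"
  assumes H: "\<forall>z. z \<noteq> 0 \<longrightarrow> qf B z \<ge> 0 \<longrightarrow> qf A z > 0" and x0: "qf B x0 > 0"
  shows "\<exists>\<tau>\<ge>0. \<forall>z. z \<noteq> 0 \<longrightarrow> qf A z - \<tau> * qf B z > 0"
proof -
  define K where "K = sphere (0::real^'m) 1 \<inter> {z. 0 \<le> qf B z}"
  have x0n: "x0 \<noteq> 0" using x0 by auto
  define u0 where "u0 = (1 / norm x0) *\<^sub>R x0"
  have "u0 \<in> K" unfolding K_def u0_def using x0 x0n qf_scale[of B "1 / norm x0" x0]
    by (auto simp: norm_scaleR)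
  then have Kne: "K \<noteq> {}" by auto
  have Kc: "compact K" unfolding K_def
    by (intro compact_Int_closed compact_sphere closed_Collect_le continuous_on_const qf_cont)
  have cK: "continuous_on K (qf A)" by (rule continuous_on_subset[OF qf_cont]) simp
  obtain z0 where z0: "z0 \<in> K" "\<And>y. y \<in> K \<Longrightarrow> qf A z0 \<le> qf A y"
    using continuous_attains_inf[OF Kc Kne cK] by blast
  define e where "e = qf A z0"
  have "z0 \<noteq> 0" using z0(1) unfolding K_def by auto
  then have e0: "e > 0" unfolding e_def using z0(1) H unfolding K_def by auto
  have bound: "qf A z \<ge> e * (z \<bullet> z)" if "qf B z \<ge> 0" for z
  proof (cases "z = 0")
    case True then show ?thesis by simp
  next
    case False
    define n where "n = norm z"
    have n0: "n > 0" using False n_def by simp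
    define u where "u = (1 / n) *\<^sub>R z"
    have "qf B u = (1/n)^2 * qf B z" unfolding u_def by (rule qf_scale)
    then have "u \<in> K" unfolding K_def u_def using that n0 n_def by (auto simp: norm_scaleR)
    then have "e \<le> qf A u" using z0 e_def by auto
    also have "qf A u = (1/n)^2 * qf A z" unfolding u_def by (rule qf_scale)
    finally have "e * n^2 \<le> qf A z" using n0 by (simp add: field_simps)
    moreover have "n^2 = z \<bullet> z" unfolding n_def by (simp add: power2_norm_eq_inner)
    ultimately show ?thesis by simp
  qed
  have "\<forall>z. qf B z \<ge> 0 \<longrightarrow> qf (A - e *\<^sub>R mat 1) z \<ge> 0" using bound by (simp add: qf_shift)
  from s_lemma[OF this x0] obtain \<tau> where t: "\<tau> \<ge> 0" "\<And>z. qf (A - e *\<^sub>R mat 1) z - \<tau> * qf B z \<ge> 0"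
    by blast
  have "qf A z - \<tau> * qf B z > 0" if "z \<noteq> 0" for z
  proof -
    have "z \<bullet> z > 0" using that by simp
    then have "e * (z \<bullet> z) > 0" using e0 by simp
    moreover have "qf A z - e * (z \<bullet> z) - \<tau> * qf B z \<ge> 0" using t(2)[of z] by (simp add: qf_shift)
    ultimately show ?thesis by linarith
  qed
  then show ?thesis using t(1) by blast
qed



lemma prL_0[simp]: "prL 0 = 0" by (simp add: prL_def vec_eq_iff)
lemma prR_0[simp]: "prR 0 = 0" by (simp add: prR_def vec_eq_iff)

lemma neg_mat_vec: "(- A) *v x = - (A *v (x::real^'n))"
  by (simp add: matrix_vector_mult_def vec_eq_iff sum_negf)
lemma mat_vec_neg: "A *v (- x) = - (A *v (x::real^'n))"
  by (simp add: matrix_vector_mult_def vec_eq_iff sum_negf)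

lemma qf_comb: "qf (M - a *\<^sub>R N) z = qf M z - a * qf N z"
proof -
  have "(a *\<^sub>R N) *v z = a *\<^sub>R (N *v z)" by (metis scaleR_matrix_vector_assoc)
  then show ?thesis unfolding qf_def by (simp add: matrix_vector_mult_diff_rdistrib inner_diff_right)
qed

lemma sym_comb: "symmetric_mat M \<Longrightarrow> symmetric_mat N \<Longrightarrow> symmetric_mat (M - a *\<^sub>R N)"
proof -
  assume "symmetric_mat M" "symmetric_mat N"
  moreover have "transpose (M - a *\<^sub>R N) = transpose M - a *\<^sub>R transpose N"
    by (simp add: transpose_def vec_eq_iff)
  ultimately show ?thesis unfolding symmetric_mat_def by simp
qed

lemma inj_of_invertible: "invertible (A::real^'n^'n) \<Longrightarrow> A *v x = 0 \<Longrightarrow> x = 0"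
  using invertible_left_inverse matrix_left_invertible_ker by metis

theorem corollary2:
  fixes M N :: "real^('k::finite + 'n::finite)^('k + 'n)"
  assumes "symmetric_mat M" and "symmetric_mat N"
    and "invertible N"
    and "psd (blk11 N)" and "pd (- blk22 N)"
  shows "(\<forall>Z \<in> S_N N. pd (quadIZ M Z)) \<longleftrightarrow> (\<exists>\<alpha>::real. \<alpha> \<ge> 0 \<and> pd (M - \<alpha> *\<^sub>R N))"
proof
  assume L: "\<forall>Z \<in> S_N N. pd (quadIZ M Z)"
  define T where "T = blk22 N"
  define C where "C = Cb N"
  have Tneg: "qf N (Rv w) < 0" if "w \<noteq> 0" for w
  proof -
    have "0 < w \<bullet> ((- T) *v w)" using assms(5) that unfolding pd_def T_def by auto
    then show ?thesis by (simp add: qf_Rv T_def neg_mat_vec)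
  qed
  have Tle: "qf N (Rv w) \<le> 0" for w
    using Tneg[of w] by (cases "w = 0") auto
  have Tinj: "\<forall>w. T *v w = 0 \<longrightarrow> w = 0"
  proof (intro allI impI, rule ccontr)
    fix w assume w: "T *v w = 0" "w \<noteq> 0"
    then have "qf N (Rv w) = 0" by (simp add: qf_Rv T_def)
    with Tneg[OF w(2)] show False by simp
  qed
  then have "invertible T" using invertible_left_inverse matrix_left_invertible_ker by metis
  then obtain B' where TB: "T ** B' = mat 1" using invertible_right_inverse by blast
  define H where "H = - (B' ** C)"
  have TH: "T *v (H *v u) = - (C *v u)" for u
  proof -
    have "T *v (H *v u) = - (T *v ((B' ** C) *v u))" unfolding H_def by (simp add: neg_mat_vec mat_vec_neg)
    also have "T *v ((B' ** C) *v u) = C *v u"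
      by (simp add: matrix_vector_mul_assoc matrix_mul_assoc TB)
    finally show ?thesis .
  qed
  define e where "e u = Lv u + Rv (H *v u)" for u
  have eR: "prR (N *v e u) = 0" for u
  proof -
    have "prR (N *v e u) = C *v u + T *v (H *v u)" unfolding e_def C_def T_def
      by (simp add: matrix_vector_right_distrib prR_NLv prR_NRv)
    then show ?thesis using TH by simp
  qed
  have perp: "bf N (Rv w) (e u) = 0" for w u
    by (simp add: bf_def inner_commute[of "Rv w"] inner_Rv eR)
  have perp2: "bf N (e u) (Rv w) = 0" for w u
    using perp bf_sym[OF assms(2)] by metis
  have e_lin: "e (a + c *\<^sub>R b) = e a + c *\<^sub>R e b" for a b c
    unfolding e_def by (simp add: matrix_vector_right_distrib matrix_vector_mult_scaleR Lv_add Lv_scale Rv_add Rv_scale algebra_simps)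
  have e_0: "e 0 = 0" unfolding e_def by simp
  have prL_e[simp]: "prL (e u) = u" and prR_e: "prR (e u) = H *v u" for u
    unfolding e_def by simp_all
  have s_formula: "qf N (e u) = qf N (Lv u) - qf N (Rv (H *v u))" for u
  proof -
    let ?h = "Rv (H *v u)"
    have 1: "qf N (e u) = qf N (Lv u) + bf N (Lv u) ?h + bf N ?h (Lv u) + qf N ?h"
      unfolding e_def by (rule qf_add)
    have "0 = bf N ?h (e u)" using perp by simp
    also have "\<dots> = bf N ?h (Lv u) + qf N ?h" unfolding e_def by (simp add: qf_def bf_def matrix_vector_right_distrib inner_add_right)
    finally have 2: "bf N ?h (Lv u) = - qf N ?h" by simp
    have 3: "bf N (Lv u) ?h = bf N ?h (Lv u)" using bf_sym[OF assms(2)] by metis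
    show ?thesis using 1 2 3 by simp
  qed
  have N11: "symmetric_mat (blk11 N)" "\<forall>x. 0 \<le> qf (blk11 N) x"
    using assms(4) unfolding psd_def qf_def by auto
  have s_nonneg: "qf N (e u) \<ge> 0" for u
    using s_formula[of u] Tle[of "H *v u"] N11(2)[rule_format, of u] qf_Lv[of N u] unfolding qf_def by linarith
  have s_pos: "qf N (e u) > 0" if "u \<noteq> 0" for u
  proof (rule ccontr)
    assume "\<not> ?thesis"
    then have s0: "qf N (e u) = 0" using s_nonneg[of u] by simp
    have a: "qf N (Lv u) \<ge> 0" using N11(2)[rule_format, of u] qf_Lv[of N u] unfolding qf_def by linarith
    have b: "qf N (Rv (H *v u)) \<le> 0" by (rule Tle)
    have "qf N (Rv (H *v u)) = 0" using s_formula[of u] s0 a b by simp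
    then have h0: "H *v u = 0" using Tneg by force
    have "qf (blk11 N) u = 0" using s_formula[of u] s0 a b qf_Lv[of N u] N11(2)[rule_format, of u] unfolding qf_def by linarith
    then have k: "blk11 N *v u = 0" using psd_ker N11 by blast
    have "C *v u = 0" using TH[of u] h0 by simp
    then have "N *v Lv u = 0" unfolding vec_Plus_eq using k by (simp add: prL_NLv prR_NLv C_def)
    then have "(Lv u :: real^('k+'n)) = 0" by (rule inj_of_invertible[OF assms(3)])
    then show False using that by simp
  qed
  define Sb where "Sb u v = bf N (e u) (e v)" for u v
  have Sb_sym: "Sb u v = Sb v u" for u v unfolding Sb_def using bf_sym[OF assms(2)] by metis
  have s_Sb: "qf N (e u) = Sb u u" for u unfolding Sb_def qf_def bf_def by simp
  have CS: "(Sb a v)^2 \<le> qf N (e a) * qf N (e v)" if ap: "qf N (e a) > 0" for a v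
  proof -
    define t where "t = - Sb a v / qf N (e a)"
    have "0 \<le> qf N (e (v + t *\<^sub>R a))" by (rule s_nonneg)
    also have "\<dots> = qf N (e v) + t * (Sb v a + Sb a v) + t^2 * qf N (e a)"
      unfolding e_lin qf_expand Sb_def ..
    also have "\<dots> = qf N (e v) - (Sb a v)^2 / qf N (e a)"
      unfolding t_def using ap Sb_sym[of v a] by (simp add: field_simps power2_eq_square)
    finally show ?thesis using ap by (simp add: field_simps)
  qed
  have key: "qf M x > 0" if xn: "x \<noteq> 0" and xN: "qf N x \<ge> 0" for x
  proof -
    define \<xi> where "\<xi> = prL x"
    define y0 where "y0 = prR x - H *v \<xi>"
    have xd: "x = e \<xi> + Rv y0" unfolding vec_Plus_eq \<xi>_def y0_def by (simp add: prR_e)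
    have qx: "qf N x = qf N (e \<xi>) + qf N (Rv y0)"
      using qf_add[of N "e \<xi>" "Rv y0"] perp perp2 xd by simp
    have xi0: "\<xi> \<noteq> 0"
    proof
      assume "\<xi> = 0"
      then have "qf N (Rv y0) \<ge> 0" using qx xN e_0 by simp
      then have "y0 = 0" using Tneg by force
      then show False using xd \<open>\<xi> = 0\<close> e_0 xn by simp
    qed
    define s where "s = qf N (e \<xi>)"
    have sp: "s > 0" unfolding s_def using s_pos xi0 by blast
    define r0 where "r0 = - qf N (Rv y0)"
    have r0: "0 \<le> r0" "r0 \<le> s" unfolding r0_def s_def using Tle[of y0] qx xN by auto
    define g where "g = (1 / s) *\<^sub>R prL (N *v e \<xi>)"
    have gv: "g \<bullet> v = Sb \<xi> v / s" for v
    proof -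
      have "prL (N *v e \<xi>) \<bullet> v = (N *v e \<xi>) \<bullet> Lv v" by (simp add: inner_Lv)
      also have "\<dots> = (N *v e \<xi>) \<bullet> e v"
        by (simp add: e_def[of v] inner_add_right inner_Rv eR)
      also have "\<dots> = Sb \<xi> v" unfolding Sb_def bf_def using Sb_sym
        by (metis Sb_def bf_def inner_commute)
      finally show ?thesis unfolding g_def by simp
    qed
    define Y :: "real^'k^'n" where "Y = (\<chi> b j. y0 $ b * g $ j)"
    have Yv: "Y *v v = (g \<bullet> v) *\<^sub>R y0" for v
      by (simp add: Y_def matrix_vector_mult_def vec_eq_iff inner_vec_def sum_distrib_left mult_ac)
    define Z where "Z = H + Y"
    have Gv: "stackIZ Z *v v = e v + (g \<bullet> v) *\<^sub>R Rv y0" for v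
      unfolding stack_mult Z_def e_def
      by (simp add: matrix_vector_mult_add_rdistrib Yv Rv_add Rv_scale algebra_simps)
    have qZ: "qf (quadIZ N Z) v \<ge> 0" for v
    proof -
      define c where "c = g \<bullet> v"
      have "qf (quadIZ N Z) v = qf N (e v) + c^2 * qf N (Rv y0)"
        unfolding qf_quadIZ Gv c_def[symmetric] qf_expand perp perp2 by simp
      also have "\<dots> = qf N (e v) - c^2 * r0" unfolding r0_def by simp
      finally have eq: "qf (quadIZ N Z) v = qf N (e v) - c^2 * r0" .
      have "c^2 * r0 \<le> c^2 * s" using r0 by (simp add: mult_left_mono)
      also have "c^2 * s = (Sb \<xi> v)^2 / s" unfolding c_def gv using sp by (simp add: power2_eq_square field_simps)
      also have "\<dots> \<le> qf N (e v)" using CS[of \<xi> v] sp unfolding s_def by (simp add: pos_divide_le_eq mult.commute)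
      finally show ?thesis using eq by simp
    qed
    have "Z \<in> S_N N" unfolding S_N_def psd_def
      using sym_quadIZ[OF assms(2)] qZ unfolding qf_def by auto
    then have pdZ: "pd (quadIZ M Z)" using L by blast
    have "0 < qf (quadIZ M Z) \<xi>" using pdZ xi0 unfolding pd_def qf_def by auto
    also have "qf (quadIZ M Z) \<xi> = qf M x"
    proof -
      have "g \<bullet> \<xi> = 1" unfolding gv using sp s_Sb s_def by simp
      then show ?thesis unfolding qf_quadIZ Gv using xd by simp
    qed
    finally show ?thesis .
  qed
  obtain a :: 'k where True by blast
  have "axis a (1::real) \<noteq> 0" by (simp add: axis_eq_0_iff)
  then have slater: "qf N (e (axis a 1)) > 0" using s_pos by blast
  obtain \<tau> where t: "\<tau> \<ge> 0" "\<forall>z. z \<noteq> 0 \<longrightarrow> qf M z - \<tau> * qf N z > 0"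
    using s_lemma_strict[OF _ slater, of M] key by blast
  have "\<forall>x. x \<noteq> 0 \<longrightarrow> 0 < x \<bullet> ((M - \<tau> *\<^sub>R N) *v x)"
    using t(2) qf_comb[of M \<tau> N] unfolding qf_def by auto
  then have "pd (M - \<tau> *\<^sub>R N)" unfolding pd_def
    using sym_comb[OF assms(1,2)] by blast
  then show "\<exists>\<alpha>::real. \<alpha> \<ge> 0 \<and> pd (M - \<alpha> *\<^sub>R N)" using t(1) by blast
next
  assume "\<exists>\<alpha>::real. \<alpha> \<ge> 0 \<and> pd (M - \<alpha> *\<^sub>R N)"
  then obtain a where a: "a \<ge> 0" "pd (M - a *\<^sub>R N)" by blast
  show "\<forall>Z \<in> S_N N. pd (quadIZ M Z)"
  proof
    fix Z assume "Z \<in> S_N N"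
    then have pN: "\<forall>v. 0 \<le> qf (quadIZ N Z) v" unfolding S_N_def psd_def qf_def by auto
    have "0 < qf (quadIZ M Z) v" if "v \<noteq> 0" for v
    proof -
      define x where "x = stackIZ Z *v v"
      have "prL x = v" unfolding x_def stack_mult by simp
      then have "x \<noteq> 0" using that by auto
      then have "0 < qf (M - a *\<^sub>R N) x" using a(2) unfolding pd_def qf_def by auto
      moreover have "0 \<le> a * qf N x" using pN[rule_format, of v] a(1) unfolding qf_quadIZ x_def by simp
      ultimately show ?thesis unfolding qf_quadIZ x_def[symmetric] qf_comb by simp
    qed
    then show "pd (quadIZ M Z)" unfolding pd_def using sym_quadIZ[OF assms(1)] unfolding qf_def by auto
  qed
qed

end
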